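(* Let $p\ge1$ and let $T_\alpha{}_i^{k_1\cdots k_p}=T_\alpha{}_i^{(k_1\cdots k_p)}$ be constants (indices $i,k_r\in\{0,1,2,3\}$, $\alpha$ ranging over a finite index set) such that \[T_\alpha{}_i^{k_1\cdots k_p}\,a^\alpha_{k_1\cdots k_p}{}_j{}^j=T_\alpha{}_j^{k_1\cdots k_p}\,a^\alpha_{k_1\cdots k_p}{}_i{}^j\] holds identically in the variables $a^\alpha_{i_1\cdots i_{p+2}}$, which are arbitrary and totally symmetric in their lower indices. Then there are constants $S_\alpha^{k_1\cdots k_{p-1}}=S_\alpha^{(k_1\cdots k_{p-1})}$ such that $T_\alpha{}_i^{k_1\cdots k_p}=\delta_i^{(k_1}S_\alpha^{k_2\cdots k_p)}$.
   Context: Indices are raised and lowered with the Minkowski metric $\eta=\mathrm{diag}(-1,1,1,1)$, round brackets denote symmetrization, repeated indices are summed. *)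

theory Defs
  imports Complex_Main "HOL-Library.Multiset" "HOL-Combinatorics.Permutations"
begin

definition idx :: "nat \<Rightarrow> nat list set" where
  "idx n = {ks. length ks = n \<and> set ks \<subseteq> {..<4}}"

text \<open>Minkowski metric eta = diag(-1,1,1,1) (equal to its inverse).\<close>
definition eta :: "nat \<Rightarrow> nat \<Rightarrow> real" where
  "eta i j = (if i = j then (if i = 0 then -1 else 1) else 0)"

definition kdelta :: "nat \<Rightarrow> nat \<Rightarrow> real" where
  "kdelta i j = (if i = j then 1 else 0)"

definition sym_on_idx :: "nat \<Rightarrow> (nat list \<Rightarrow> real) \<Rightarrow> bool" where
  "sym_on_idx n f = (\<forall>xs\<in>idx n. \<forall>ys\<in>idx n. mset xs = mset ys \<longrightarrow> f xs = f ys)"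

text \<open>delta_i^{(k_1} S^{k_2 ... k_p)}: average over all permutations of the p upper indices.\<close>
definition delta_sym :: "nat \<Rightarrow> (nat list \<Rightarrow> real) \<Rightarrow> nat \<Rightarrow> nat list \<Rightarrow> real" where
  "delta_sym p S i ks = (1 / fact p) *
     (\<Sum>\<sigma>\<in>{\<sigma>. \<sigma> permutes {..<p}}.
        kdelta i (ks ! \<sigma> 0) * S (map (\<lambda>r. ks ! \<sigma> r) [1..<p]))"

end

theory Submission
  imports Defs
begin

definition fib :: "nat \<Rightarrow> nat multiset \<Rightarrow> nat list set" where
  "fib p K = {ks \<in> idx p. mset ks = K}"

lemma finite_idx: "finite (idx n)"
proof -
  have "idx n = {xs. set xs \<subseteq> {..<4} \<and> length xs = n}" by (auto simp: idx_def)
  thus ?thesis using finite_lists_length_eq[of "{..<4::nat}" n] by simp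
qed

lemma finite_fib: "finite (fib p K)"
  unfolding fib_def using finite_idx by simp

lemma sum_only:
  assumes "finite A" "a \<in> A" "\<And>b. b \<in> A \<Longrightarrow> b \<noteq> a \<Longrightarrow> f b = 0"
  shows "sum f A = f a"
proof -
  have "sum f A = f a + sum f (A - {a})" using assms by (simp add: sum.remove)
  also have "sum f (A - {a}) = 0" using assms by (intro sum.neutral) auto
  finally show ?thesis by simp
qed

lemma eta_nz: "eta j j \<noteq> 0" by (simp add: eta_def)

lemma cancelQ:
  fixes D :: "nat multiset \<Rightarrow> real" and P :: "nat multiset \<Rightarrow> bool"
  assumes jz: "jz < 4"
    and supp: "\<And>K. D K \<noteq> 0 \<Longrightarrow> size K = q \<and> P K"
    and clos: "\<And>K. P K \<Longrightarrow> P (K + {#jz,jz#})"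
    and eq: "\<And>N. P N \<Longrightarrow> (\<Sum>j<4. eta j j * (if {#j,j#} \<subseteq># N then D (N - {#j,j#}) else 0)) = 0"
  shows "D K = 0"
proof (rule ccontr)
  assume K: "D K \<noteq> 0"
  define A where "A = {count K jz | K. D K \<noteq> 0}"
  have Asub: "A \<subseteq> {..q}"
  proof
    fix x assume "x \<in> A"
    then obtain K' where "x = count K' jz" "D K' \<noteq> 0" unfolding A_def by auto
    moreover have "count K' jz \<le> size K'" by (simp add: count_le_size)
    ultimately show "x \<in> {..q}" using supp by fastforce
  qed
  hence finA: "finite A" by (rule finite_subset) simp
  have "count K jz \<in> A" using K unfolding A_def by auto
  hence neA: "A \<noteq> {}" by auto
  define m where "m = Max A"
  have "m \<in> A" unfolding m_def using finA neA by simp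
  then obtain K0 where K0: "D K0 \<noteq> 0" "count K0 jz = m" unfolding A_def by auto
  have mmax: "\<And>K'. D K' \<noteq> 0 \<Longrightarrow> count K' jz \<le> m"
    unfolding m_def using finA by (intro Max_ge) (auto simp: A_def)
  define N where "N = K0 + {#jz,jz#}"
  have PN: "P N" unfolding N_def using supp[OF K0(1)] clos by blast
  have "(\<Sum>j<4. eta j j * (if {#j,j#} \<subseteq># N then D (N - {#j,j#}) else 0))
        = eta jz jz * (if {#jz,jz#} \<subseteq># N then D (N - {#jz,jz#}) else 0)"
  proof (rule sum_only)
    fix j assume j: "j \<in> {..<4}" "j \<noteq> jz"
    show "eta j j * (if {#j,j#} \<subseteq># N then D (N - {#j,j#}) else 0) = 0"
    proof (cases "D (N - {#j,j#}) = 0")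
      case False
      have "count (N - {#j,j#}) jz = m + 2" using j K0 by (simp add: N_def)
      with mmax[OF False] show ?thesis by simp
    qed simp
  qed (use jz in auto)
  also have "\<dots> = eta jz jz * D K0" by (simp add: N_def)
  finally have "eta jz jz * D K0 = 0" using eq[OF PN] by simp
  with eta_nz K0 show False by simp
qed


definition tau :: "nat \<Rightarrow> ('a \<Rightarrow> nat \<Rightarrow> nat list \<Rightarrow> real) \<Rightarrow> 'a \<Rightarrow> nat \<Rightarrow> nat multiset \<Rightarrow> real" where
  "tau p T \<alpha> i K = (\<Sum>ks\<in>fib p K. T \<alpha> i ks)"

lemma sum_filter_mset:
  "(\<Sum>ks\<in>idx p. if mset ks + X = N then f ks else 0)
     = (if X \<subseteq># N then (\<Sum>ks\<in>fib p (N - X). f ks) else 0)"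
proof -
  have "(\<Sum>ks\<in>idx p. if mset ks + X = N then f ks else 0) = (\<Sum>ks\<in>{ks\<in>idx p. mset ks + X = N}. f ks)"
    using finite_idx by (simp add: sum.inter_filter)
  also have "{ks\<in>idx p. mset ks + X = N} = (if X \<subseteq># N then fib p (N - X) else {})"
    by (auto simp: fib_def)
  finally show ?thesis by simp
qed

lemma cond_side:
  fixes T :: "'a::finite \<Rightarrow> nat \<Rightarrow> nat list \<Rightarrow> real"
  assumes f: "\<And>j. j < 4 \<Longrightarrow> f j < 4"
  shows "(\<Sum>\<beta>\<in>UNIV. \<Sum>ks\<in>idx p. \<Sum>j<4. \<Sum>l<4. T \<beta> (f j) ks *
            (eta j l * (\<lambda>\<beta> M. if \<beta> = \<alpha> \<and> mset M = N then 1 else 0) \<beta> (ks @ [g j, l])))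
     = (\<Sum>j<4. eta j j * (if {#g j, j#} \<subseteq># N then tau p T \<alpha> (f j) (N - {#g j, j#}) else 0))"
proof -
  have "(\<Sum>\<beta>\<in>UNIV. \<Sum>ks\<in>idx p. \<Sum>j<4. \<Sum>l<4. T \<beta> (f j) ks *
            (eta j l * (\<lambda>\<beta> M. if \<beta> = \<alpha> \<and> mset M = N then 1 else 0) \<beta> (ks @ [g j, l])))
      = (\<Sum>ks\<in>idx p. \<Sum>j<4. \<Sum>l<4. T \<alpha> (f j) ks *
            (eta j l * (if mset (ks @ [g j, l]) = N then 1 else 0)))"
    by (rule trans[OF sum_only[where a=\<alpha>]]) auto
  also have "\<dots> = (\<Sum>ks\<in>idx p. \<Sum>j<4. T \<alpha> (f j) ks *
            (eta j j * (if mset (ks @ [g j, j]) = N then 1 else 0)))"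
  proof (intro sum.cong refl)
    fix ks j assume "j \<in> {..<4::nat}"
    show "(\<Sum>l<4. T \<alpha> (f j) ks * (eta j l * (if mset (ks @ [g j, l]) = N then 1 else 0)))
        = T \<alpha> (f j) ks * (eta j j * (if mset (ks @ [g j, j]) = N then 1 else 0))"
      by (rule trans[OF sum_only[where a=j]]) (use \<open>j \<in> _\<close> in \<open>auto simp: eta_def\<close>)
  qed
  also have "\<dots> = (\<Sum>j<4. \<Sum>ks\<in>idx p. T \<alpha> (f j) ks *
            (eta j j * (if mset (ks @ [g j, j]) = N then 1 else 0)))"
    by (rule sum.swap)
  also have "\<dots> = (\<Sum>j<4. eta j j * (\<Sum>ks\<in>idx p. if mset ks + {#g j, j#} = N then T \<alpha> (f j) ks else 0))"
    by (intro sum.cong refl) (auto simp: sum_distrib_left intro!: sum.cong)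
  also have "\<dots> = (\<Sum>j<4. eta j j * (if {#g j, j#} \<subseteq># N then tau p T \<alpha> (f j) (N - {#g j, j#}) else 0))"
    by (simp only: sum_filter_mset tau_def)
  finally show ?thesis .
qed


lemma cond:
  fixes T :: "'a::finite \<Rightarrow> nat \<Rightarrow> nat list \<Rightarrow> real"
  assumes H: "\<forall>a :: 'a \<Rightarrow> nat list \<Rightarrow> real. (\<forall>\<alpha>. sym_on_idx (p + 2) (a \<alpha>)) \<longrightarrow>
          (\<forall>i<4.
            (\<Sum>\<alpha>\<in>UNIV. \<Sum>ks\<in>idx p. \<Sum>j<4. \<Sum>l<4. T \<alpha> i ks * (eta j l * a \<alpha> (ks @ [j, l])))
          = (\<Sum>\<alpha>\<in>UNIV. \<Sum>ks\<in>idx p. \<Sum>j<4. \<Sum>l<4. T \<alpha> j ks * (eta j l * a \<alpha> (ks @ [i, l]))))"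
    and i: "i < 4"
  shows "(\<Sum>j<4. eta j j * (if {#j,j#} \<subseteq># N then tau p T \<alpha> i (N - {#j,j#}) else 0))
       = (\<Sum>j<4. eta j j * (if {#i,j#} \<subseteq># N then tau p T \<alpha> j (N - {#i,j#}) else 0))"
proof -
  let ?a = "\<lambda>\<beta> M. if \<beta> = \<alpha> \<and> mset M = N then 1 else (0::real)"
  have s: "\<And>\<beta>. sym_on_idx (p+2) (?a \<beta>)" by (auto simp: sym_on_idx_def)
  have E: "(\<Sum>\<beta>\<in>UNIV. \<Sum>ks\<in>idx p. \<Sum>j<4. \<Sum>l<4. T \<beta> i ks * (eta j l * ?a \<beta> (ks @ [j, l])))
          = (\<Sum>\<beta>\<in>UNIV. \<Sum>ks\<in>idx p. \<Sum>j<4. \<Sum>l<4. T \<beta> j ks * (eta j l * ?a \<beta> (ks @ [i, l])))"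
    using H[rule_format, OF s i] by simp
  have L: "(\<Sum>\<beta>\<in>UNIV. \<Sum>ks\<in>idx p. \<Sum>j<4. \<Sum>l<4. T \<beta> i ks * (eta j l * ?a \<beta> (ks @ [j, l])))
     = (\<Sum>j<4. eta j j * (if {#j,j#} \<subseteq># N then tau p T \<alpha> i (N - {#j,j#}) else 0))"
    using cond_side[where f="\<lambda>j. i" and T=T and g="\<lambda>j. j" and \<alpha>=\<alpha> and N=N and p=p] i by simp
  have R: "(\<Sum>\<beta>\<in>UNIV. \<Sum>ks\<in>idx p. \<Sum>j<4. \<Sum>l<4. T \<beta> j ks * (eta j l * ?a \<beta> (ks @ [i, l])))
     = (\<Sum>j<4. eta j j * (if {#i,j#} \<subseteq># N then tau p T \<alpha> j (N - {#i,j#}) else 0))"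
    using cond_side[where f="\<lambda>j. j" and T=T and g="\<lambda>j. i" and \<alpha>=\<alpha> and N=N and p=p] by simp
  show ?thesis using E L R by simp
qed

lemma tau_size: "tau p T \<alpha> i K \<noteq> 0 \<Longrightarrow> size K = p"
proof -
  assume "tau p T \<alpha> i K \<noteq> 0"
  then obtain ks where "ks \<in> fib p K" unfolding tau_def by (meson sum.neutral)
  thus ?thesis unfolding fib_def idx_def by auto
qed

lemma stepA:
  fixes T :: "'a::finite \<Rightarrow> nat \<Rightarrow> nat list \<Rightarrow> real"
  assumes H: "\<And>i N. i < 4 \<Longrightarrow> (\<Sum>j<4. eta j j * (if {#j,j#} \<subseteq># N then tau p T \<alpha> i (N - {#j,j#}) else 0))
       = (\<Sum>j<4. eta j j * (if {#i,j#} \<subseteq># N then tau p T \<alpha> j (N - {#i,j#}) else 0))"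
    and i: "i < 4" and K: "i \<notin># K"
  shows "tau p T \<alpha> i K = 0"
proof -
  define D where "D K = (if i \<in># K then 0 else tau p T \<alpha> i K)" for K
  have "D K = 0"
  proof (rule cancelQ[where jz="if i = 0 then 1 else 0" and q=p and P="\<lambda>K. i \<notin># K"])
    fix K assume "D K \<noteq> 0" thus "size K = p \<and> i \<notin># K"
      unfolding D_def using tau_size by (auto split: if_splits)
  next
    fix K assume "i \<notin># K" thus "i \<notin># K + {#if i = 0 then 1 else 0, if i = 0 then 1 else 0#}" by auto
  next
    fix N assume N: "i \<notin># N"
    have "(\<Sum>j<4. eta j j * (if {#j,j#} \<subseteq># N then D (N - {#j,j#}) else 0))
        = (\<Sum>j<4. eta j j * (if {#j,j#} \<subseteq># N then tau p T \<alpha> i (N - {#j,j#}) else 0))"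
    proof (intro sum.cong refl)
      fix j
      have "i \<notin># N - {#j,j#}" using N by (meson in_diffD)
      thus "eta j j * (if {#j,j#} \<subseteq># N then D (N - {#j,j#}) else 0)
          = eta j j * (if {#j,j#} \<subseteq># N then tau p T \<alpha> i (N - {#j,j#}) else 0)"
        by (simp add: D_def)
    qed
    also have "\<dots> = (\<Sum>j<4. eta j j * (if {#i,j#} \<subseteq># N then tau p T \<alpha> j (N - {#i,j#}) else 0))"
      by (rule H[OF i])
    also have "\<dots> = 0" using N by (auto intro!: sum.neutral dest: mset_subset_eq_insertD)
    finally show "(\<Sum>j<4. eta j j * (if {#j,j#} \<subseteq># N then D (N - {#j,j#}) else 0)) = 0" .
  qed simp
  thus ?thesis using K by (simp add: D_def)
qed


lemma stepB0:
  fixes T :: "'a::finite \<Rightarrow> nat \<Rightarrow> nat list \<Rightarrow> real"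
  assumes H: "\<And>i N. i < 4 \<Longrightarrow> (\<Sum>j<4. eta j j * (if {#j,j#} \<subseteq># N then tau p T \<alpha> i (N - {#j,j#}) else 0))
       = (\<Sum>j<4. eta j j * (if {#i,j#} \<subseteq># N then tau p T \<alpha> j (N - {#i,j#}) else 0))"
    and i: "i < 4"
  shows "(\<Sum>j<4. eta j j * (if {#j,j#} \<subseteq># M then tau p T \<alpha> i (M - {#j,j#} + {#i#}) else 0))
       = (\<Sum>j<4. eta j j * (if {#j#} \<subseteq># M then tau p T \<alpha> j (M - {#j#}) else 0))"
proof -
  let ?N = "M + {#i#}"
  have "(\<Sum>j<4. eta j j * (if {#j,j#} \<subseteq># M then tau p T \<alpha> i (M - {#j,j#} + {#i#}) else 0))
      = (\<Sum>j<4. eta j j * (if {#j,j#} \<subseteq># ?N then tau p T \<alpha> i (?N - {#j,j#}) else 0))"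
  proof (intro sum.cong refl)
    fix j
    show "eta j j * (if {#j,j#} \<subseteq># M then tau p T \<alpha> i (M - {#j,j#} + {#i#}) else 0)
      = eta j j * (if {#j,j#} \<subseteq># ?N then tau p T \<alpha> i (?N - {#j,j#}) else 0)"
    proof (cases "{#j,j#} \<subseteq># M")
      case True
      hence "?N - {#j,j#} = M - {#j,j#} + {#i#}"
        by (metis subset_mset.diff_add_assoc2 subset_mset.le_add_same_cancel1 zero_le union_commute add_diff_cancel_left' subset_mset.add_diff_assoc2)
      moreover have "{#j,j#} \<subseteq># ?N"
        by (metis True mset_subset_eq_add_left subset_mset.order_trans)
      ultimately show ?thesis using True by simp
    next
      case False
      show ?thesis
      proof (cases "{#j,j#} \<subseteq># ?N")
        case True
        have ji: "j = i"
        proof (rule ccontr)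
          assume "j \<noteq> i"
          with True False show False
            by (auto simp: subseteq_mset_def split: if_splits)
        qed
        obtain a where a: "count {#j,j#} a > count M a"
          using False by (auto simp: subseteq_mset_def not_le)
        hence "a = j" by (cases "a = j") auto
        with a have "count M i < 2" using ji by simp
        hence "i \<notin># ?N - {#j,j#}"
          using ji by (simp add: not_in_iff)
        hence "tau p T \<alpha> i (?N - {#j,j#}) = 0" by (intro stepA[where T=T and \<alpha>=\<alpha> and p=p] H i)
        with False True show ?thesis by simp
      qed (use False in simp)
    qed
  qed
  also have "\<dots> = (\<Sum>j<4. eta j j * (if {#i,j#} \<subseteq># ?N then tau p T \<alpha> j (?N - {#i,j#}) else 0))"
    by (rule H[OF i])
  also have "\<dots> = (\<Sum>j<4. eta j j * (if {#j#} \<subseteq># M then tau p T \<alpha> j (M - {#j#}) else 0))"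
    by (intro sum.cong refl) simp
  finally show ?thesis .
qed


lemma stepB:
  fixes T :: "'a::finite \<Rightarrow> nat \<Rightarrow> nat list \<Rightarrow> real"
  assumes H: "\<And>i N. i < 4 \<Longrightarrow> (\<Sum>j<4. eta j j * (if {#j,j#} \<subseteq># N then tau p T \<alpha> i (N - {#j,j#}) else 0))
       = (\<Sum>j<4. eta j j * (if {#i,j#} \<subseteq># N then tau p T \<alpha> j (N - {#i,j#}) else 0))"
    and i: "i < 4" and k: "k < 4"
  shows "tau p T \<alpha> i (L + {#i#}) = tau p T \<alpha> k (L + {#k#})"
proof -
  define D where "D L = tau p T \<alpha> i (L + {#i#}) - tau p T \<alpha> k (L + {#k#})" for L
  have "D L = 0"
  proof (rule cancelQ[where jz=0 and q="p - 1" and P="\<lambda>_. True"])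
    fix K assume "D K \<noteq> 0"
    hence "tau p T \<alpha> i (K + {#i#}) \<noteq> 0 \<or> tau p T \<alpha> k (K + {#k#}) \<noteq> 0" unfolding D_def by auto
    thus "size K = p - 1 \<and> True" using tau_size by fastforce
  next
    fix N
    have "(\<Sum>j<4. eta j j * (if {#j,j#} \<subseteq># N then D (N - {#j,j#}) else 0))
      = (\<Sum>j<4. eta j j * (if {#j,j#} \<subseteq># N then tau p T \<alpha> i (N - {#j,j#} + {#i#}) else 0))
      - (\<Sum>j<4. eta j j * (if {#j,j#} \<subseteq># N then tau p T \<alpha> k (N - {#j,j#} + {#k#}) else 0))"
      unfolding sum_subtractf[symmetric] by (intro sum.cong refl) (simp add: D_def algebra_simps)
    also have "\<dots> = 0" using stepB0[OF H i, of N] stepB0[OF H k, of N] by simp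
    finally show "(\<Sum>j<4. eta j j * (if {#j,j#} \<subseteq># N then D (N - {#j,j#}) else 0)) = 0" .
  qed auto
  thus ?thesis by (simp add: D_def)
qed


lemma permute_fib:
  assumes s: "\<sigma> permutes {..<p}"
  shows "(\<Sum>ks'\<in>fib p K. F (permute_list \<sigma> ks')) = (\<Sum>ks'\<in>fib p K. F ks')"
proof (rule sum.reindex_bij_witness[where j="permute_list \<sigma>" and i="permute_list (inv \<sigma>)"])
  have si: "inv \<sigma> permutes {..<p}" using s by (rule permutes_inv)
  fix a assume a: "a \<in> fib p K"
  hence la: "length a = p" by (simp add: fib_def idx_def)
  have "permute_list (\<sigma> \<circ> inv \<sigma>) a = permute_list (inv \<sigma>) (permute_list \<sigma> a)"
    using si la by (intro permute_list_compose) simp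
  thus "permute_list (inv \<sigma>) (permute_list \<sigma> a) = a" using permutes_inv_o(1)[OF s] by simp
  have "inv \<sigma> \<circ> \<sigma> = id" using permutes_inv_o(2)[OF s] .
  have "permute_list (inv \<sigma> \<circ> \<sigma>) a = permute_list \<sigma> (permute_list (inv \<sigma>) a)"
    using s la by (intro permute_list_compose) simp
  thus "permute_list \<sigma> (permute_list (inv \<sigma>) a) = a" using permutes_inv_o(2)[OF s] by simp
  have m1: "mset (permute_list \<sigma> a) = mset a" using s la by (intro mset_permute_list) simp
  have m2: "mset (permute_list (inv \<sigma>) a) = mset a" using si la by (intro mset_permute_list) simp
  have "set (permute_list \<sigma> a) = set a" by (metis m1 set_mset_mset)
  thus "permute_list \<sigma> a \<in> fib p K" using a m1 by (auto simp: fib_def idx_def)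
  have "set (permute_list (inv \<sigma>) a) = set a" by (metis m2 set_mset_mset)
  thus "permute_list (inv \<sigma>) a \<in> fib p K" using a m2 by (auto simp: fib_def idx_def)
qed simp

lemma avg:
  assumes ks: "ks \<in> idx p"
  shows "real (card (fib p (mset ks))) * (\<Sum>\<sigma>\<in>{\<sigma>. \<sigma> permutes {..<p}}. F (permute_list \<sigma> ks))
       = fact p * (\<Sum>ks'\<in>fib p (mset ks). F ks')"
proof -
  let ?P = "{\<sigma>. \<sigma> permutes {..<p}}"
  define G where "G xs = (\<Sum>\<sigma>\<in>?P. F (permute_list \<sigma> xs))" for xs
  have lk: "length ks = p" using ks by (simp add: idx_def)
  have GG: "G ks' = G ks" if k': "ks' \<in> fib p (mset ks)" for ks'
  proof -
    have "mset ks' = mset ks" using k' by (simp add: fib_def)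
    then obtain \<pi> where pi: "\<pi> permutes {..<length ks}" "permute_list \<pi> ks = ks'"
      by (rule mset_eq_permutation)
    have "G ks = (\<Sum>\<sigma>\<in>?P. F (permute_list (\<pi> \<circ> \<sigma>) ks))"
      unfolding G_def using pi lk by (subst setum_permutations_compose_left[where q=\<pi>]) auto
    also have "\<dots> = (\<Sum>\<sigma>\<in>?P. F (permute_list \<sigma> (permute_list \<pi> ks)))"
      using lk by (intro sum.cong refl) (simp add: permute_list_compose)
    finally show ?thesis using pi by (simp add: G_def)
  qed
  have "(\<Sum>ks'\<in>fib p (mset ks). G ks') = real (card (fib p (mset ks))) * G ks"
    using GG by simp
  moreover have "(\<Sum>ks'\<in>fib p (mset ks). G ks') = (\<Sum>\<sigma>\<in>?P. \<Sum>ks'\<in>fib p (mset ks). F (permute_list \<sigma> ks'))"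
    unfolding G_def by (rule sum.swap)
  moreover have "\<dots> = (\<Sum>\<sigma>\<in>?P. \<Sum>ks'\<in>fib p (mset ks). F ks')"
    by (intro sum.cong refl permute_fib) simp
  moreover have "\<dots> = fact p * (\<Sum>ks'\<in>fib p (mset ks). F ks')"
    using card_permutations[of "{..<p}" p] by simp
  ultimately show ?thesis by (simp add: G_def)
qed


lemma hd_sum:
  assumes p: "p \<ge> 1" and i: "i < 4"
  shows "(\<Sum>ks'\<in>fib p K. kdelta i (ks' ! 0) * g (tl ks'))
       = (if i \<in># K then (\<Sum>ls\<in>fib (p - 1) (K - {#i#}). g ls) else 0)"
proof -
  have "(\<Sum>ks'\<in>fib p K. kdelta i (ks' ! 0) * g (tl ks'))
      = (\<Sum>ks'\<in>{ks'\<in>fib p K. ks' ! 0 = i}. g (tl ks'))"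
    using finite_fib by (simp add: sum.inter_filter) (intro sum.cong refl, auto simp: kdelta_def)
  also have "\<dots> = (if i \<in># K then (\<Sum>ls\<in>fib (p - 1) (K - {#i#}). g ls) else 0)"
  proof (cases "i \<in># K")
    case True
    have "{ks'\<in>fib p K. ks' ! 0 = i} = (Cons i) ` fib (p - 1) (K - {#i#})"
    proof (intro equalityI subsetI)
      fix ks' assume a: "ks' \<in> {ks'\<in>fib p K. ks' ! 0 = i}"
      then obtain x ls where ks': "ks' = x # ls" using p
        by (cases ks') (auto simp: fib_def idx_def)
      with a have "x = i" by simp
      with a ks' show "ks' \<in> (Cons i) ` fib (p - 1) (K - {#i#})"
        by (auto simp: fib_def idx_def)
    next
      fix ks' assume "ks' \<in> (Cons i) ` fib (p - 1) (K - {#i#})"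
      then obtain ls where ks': "ks' = i # ls" "ls \<in> fib (p - 1) (K - {#i#})" by auto
      thus "ks' \<in> {ks'\<in>fib p K. ks' ! 0 = i}" using True p i
        by (auto simp: fib_def idx_def)
    qed
    thus ?thesis using True by (simp add: sum.reindex)
  next
    case False
    have "{ks'\<in>fib p K. ks' ! 0 = i} = {}"
    proof (intro equalityI subsetI)
      fix ks' assume a: "ks' \<in> {ks'\<in>fib p K. ks' ! 0 = i}"
      hence "length ks' = p" "mset ks' = K" "ks' ! 0 = i" by (auto simp: fib_def idx_def)
      hence "i \<in># K" using p by (metis One_nat_def Suc_le_lessD in_multiset_in_set nth_mem)
      with False show "ks' \<in> {}" by simp
    qed simp
    thus ?thesis using False by (simp only:) simp
  qed
  finally show ?thesis .
qed


theorem proposition3p1: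
  fixes p :: nat and T :: "'a::finite \<Rightarrow> nat \<Rightarrow> nat list \<Rightarrow> real"
  assumes "p \<ge> 1"
    and "\<forall>\<alpha>. \<forall>i<4. sym_on_idx p (T \<alpha> i)"
    and "\<forall>a :: 'a \<Rightarrow> nat list \<Rightarrow> real. (\<forall>\<alpha>. sym_on_idx (p + 2) (a \<alpha>)) \<longrightarrow>
          (\<forall>i<4.
            (\<Sum>\<alpha>\<in>UNIV. \<Sum>ks\<in>idx p. \<Sum>j<4. \<Sum>l<4. T \<alpha> i ks * (eta j l * a \<alpha> (ks @ [j, l])))
          = (\<Sum>\<alpha>\<in>UNIV. \<Sum>ks\<in>idx p. \<Sum>j<4. \<Sum>l<4. T \<alpha> j ks * (eta j l * a \<alpha> (ks @ [i, l]))))"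
  shows "\<exists>S :: 'a \<Rightarrow> nat list \<Rightarrow> real.
           (\<forall>\<alpha>. sym_on_idx (p - 1) (S \<alpha>)) \<and>
           (\<forall>\<alpha>. \<forall>i<4. \<forall>ks\<in>idx p. T \<alpha> i ks = delta_sym p (S \<alpha>) i ks)"
proof -
  note H = cond[OF assms(3)]
  define S where "S \<alpha> ls = tau p T \<alpha> 0 (mset ls + {#0#}) / real (card (fib (p - 1) (mset ls)))"
    for \<alpha> ls
  have symS: "\<forall>\<alpha>. sym_on_idx (p - 1) (S \<alpha>)" by (simp add: sym_on_idx_def S_def)
  have main: "T \<alpha> i ks = delta_sym p (S \<alpha>) i ks" if i: "i < 4" and ks: "ks \<in> idx p" for \<alpha> i ks
  proof -
    define K where "K = mset ks"
    define c where "c = card (fib p K)"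
    have ksf: "ks \<in> fib p K" using ks by (simp add: fib_def K_def)
    hence cpos: "c > 0" unfolding c_def using finite_fib card_gt_0_iff by blast
    have tauc: "tau p T \<alpha> i K = c * T \<alpha> i ks"
    proof -
      have "tau p T \<alpha> i K = (\<Sum>ks'\<in>fib p K. T \<alpha> i ks)"
        unfolding tau_def
      proof (intro sum.cong refl)
        fix ks' assume "ks' \<in> fib p K"
        thus "T \<alpha> i ks' = T \<alpha> i ks" using assms(2) i ksf
          unfolding sym_on_idx_def fib_def by auto
      qed
      thus ?thesis by (simp add: c_def)
    qed
    have lk: "length ks = p" using ks by (simp add: idx_def)
    define F where "F xs = kdelta i (xs ! 0) * S \<alpha> (tl xs)" for xs
    have "delta_sym p (S \<alpha>) i ks = 1 / fact p * (\<Sum>\<sigma>\<in>{\<sigma>. \<sigma> permutes {..<p}}. F (permute_list \<sigma> ks))"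
      unfolding delta_sym_def
    proof (intro arg_cong2[where f="(*)"] refl sum.cong)
      fix \<sigma> assume "\<sigma> \<in> {\<sigma>. \<sigma> permutes {..<p}}"
      hence s: "\<sigma> permutes {..<length ks}" using lk by simp
      have "permute_list \<sigma> ks ! 0 = ks ! \<sigma> 0"
        using assms(1) lk by (intro permute_list_nth[OF s]) simp
      moreover have "tl (permute_list \<sigma> ks) = map (\<lambda>r. ks ! \<sigma> r) [1..<p]"
        unfolding permute_list_def using lk by (simp add: map_tl[symmetric])
      ultimately show "kdelta i (ks ! \<sigma> 0) * S \<alpha> (map (\<lambda>r. ks ! \<sigma> r) [1..<p]) = F (permute_list \<sigma> ks)"
        by (simp add: F_def)
    qed
    also have "\<dots> = 1 / c * (\<Sum>ks'\<in>fib p K. F ks')"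
      using avg[OF ks, of F] cpos by (simp add: c_def K_def field_simps)
    also have "(\<Sum>ks'\<in>fib p K. F ks') = (if i \<in># K then (\<Sum>ls\<in>fib (p - 1) (K - {#i#}). S \<alpha> ls) else 0)"
      unfolding F_def by (rule hd_sum[OF assms(1) i])
    finally have D: "delta_sym p (S \<alpha>) i ks = 1 / c * (if i \<in># K then (\<Sum>ls\<in>fib (p - 1) (K - {#i#}). S \<alpha> ls) else 0)" .
    show ?thesis
    proof (cases "i \<in># K")
      case True
      define L where "L = K - {#i#}"
      have KL: "K = L + {#i#}" using True by (simp add: L_def)
      have "remove1 i ks \<in> fib (p - 1) L"
        using ks True by (auto simp: fib_def idx_def L_def K_def length_remove1 dest: set_remove1_subset[THEN subsetD])
      hence cL: "card (fib (p - 1) L) > 0" using finite_fib card_gt_0_iff by blast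
      have "(\<Sum>ls\<in>fib (p - 1) L. S \<alpha> ls) = (\<Sum>ls\<in>fib (p - 1) L. tau p T \<alpha> 0 (L + {#0#}) / real (card (fib (p - 1) L)))"
        by (intro sum.cong refl) (simp add: S_def fib_def)
      also have "\<dots> = tau p T \<alpha> 0 (L + {#0#})" using cL by simp
      also have "\<dots> = tau p T \<alpha> i (L + {#i#})" by (rule stepB[OF H _ i]) (simp_all)
      also have "\<dots> = c * T \<alpha> i ks" using tauc KL by simp
      finally show ?thesis using D True cpos by (simp add: L_def)
    next
      case False
      have "tau p T \<alpha> i K = 0" by (rule stepA[OF H i False])
      with tauc cpos have "T \<alpha> i ks = 0" by simp
      with D False show ?thesis by simp
    qed
  qed
  show ?thesis using symS main by blast
qed

end
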